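(* $\mathrm{add}_{\omega}^{*}(\mathcal{S}pl)=\omega_{1}$ and $\mathrm{cof}_{\omega}^{*}(\mathcal{S}pl)=\mathfrak{c}$.
   Context: For an infinite $A\subseteq\omega$, let $S(A)$ be the set of all $\sigma\in2^{<\omega}$ such that $\sigma$ is constant on $A\cap\mathrm{dom}(\sigma)$. The splitting ideal $\mathcal{S}pl$ is the ideal on $2^{<\omega}$ generated by the sets $S(A)$, $A\in[\omega]^{\omega}$. For an ideal $\mathcal{J}$: $\mathrm{add}_{\omega}^*(\mathcal{J})=\min\{|\mathcal{F}|:\mathcal{F}\subseteq\mathcal{J}$ and for every countable $\{X_{n}:n\in\omega\}\subseteq\mathcal{J}$ there is $A\in\mathcal{F}$ with $A\not\subseteq^{*}X_{n}$ for all $n\}$; $\mathrm{cof}_{\omega}^*(\mathcal{J})=\min\{|\mathcal{F}|:\mathcal{F}\subseteq[\mathcal{J}]^{\omega}$ and for every countable $\bar{A}\subseteq\mathcal{J}$ there is $\bar{F}\in\mathcal{F}$ such that every $A\in\bar{A}$ satisfies $A\subseteq^{*}F$ for some $F\in\bar{F}\}$. *)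

theory Defs
  imports Main "HOL-Library.Countable_Set"
begin

text \<open>Finite binary sequences 2^{<omega} are modelled as bool lists; dom(sigma) = {0..<length sigma}.\<close>

definition Sset :: "nat set \<Rightarrow> bool list set" where
  "Sset A = {\<sigma>. \<exists>b. \<forall>i\<in>A. i < length \<sigma> \<longrightarrow> \<sigma> ! i = b}"

definition Spl :: "bool list set set" where
  "Spl = {X. \<exists>G. finite G \<and> (\<forall>A\<in>G. infinite A) \<and> X \<subseteq> \<Union> (Sset ` G)}"

definition almost_subset :: "'a set \<Rightarrow> 'a set \<Rightarrow> bool" where
  "almost_subset X Y \<longleftrightarrow> finite (X - Y)"

text \<open>F witnesses the definition of add*_omega(J).\<close>
definition add_omega_family :: "'a set set \<Rightarrow> 'a set set \<Rightarrow> bool" where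
  "add_omega_family J F \<longleftrightarrow> F \<subseteq> J \<and>
     (\<forall>X :: nat \<Rightarrow> 'a set. (\<forall>n. X n \<in> J) \<longrightarrow> (\<exists>A\<in>F. \<forall>n. \<not> almost_subset A (X n)))"

text \<open>F witnesses the definition of cof*_omega(J); [J]^omega = countably infinite subsets of J.\<close>
definition cof_omega_family :: "'a set set \<Rightarrow> 'a set set set \<Rightarrow> bool" where
  "cof_omega_family J F \<longleftrightarrow> F \<subseteq> {B. B \<subseteq> J \<and> countable B \<and> infinite B} \<and>
     (\<forall>Ab. Ab \<subseteq> J \<and> countable Ab \<longrightarrow> (\<exists>Fb\<in>F. \<forall>A\<in>Ab. \<exists>C\<in>Fb. almost_subset A C))"

end

theory Submission
  imports Defs "HOL-Library.Countable_Set_Type"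
begin

context includes cardinal_syntax
begin

definition br :: "nat set \<Rightarrow> nat set" where
  "br S = range (\<lambda>n. to_nat (map (\<lambda>i. i \<in> S) [0..<n]))"

lemma br_infinite: "infinite (br S)"
proof
  assume "finite (br S)"
  moreover have "inj (\<lambda>n. to_nat (map (\<lambda>i. i \<in> S) [0..<n]))"
  proof (rule injI)
    fix x y assume "to_nat (map (\<lambda>i. i \<in> S) [0..<x]) = to_nat (map (\<lambda>i. i \<in> S) [0..<y])"
    hence "map (\<lambda>i. i \<in> S) [0..<x] = map (\<lambda>i. i \<in> S) [0..<y]" by simp
    hence "length (map (\<lambda>i. i \<in> S) [0..<x]) = length (map (\<lambda>i. i \<in> S) [0..<y])" by simp
    thus "x = y" by simp
  qed
  ultimately show False unfolding br_def using finite_imageD by blast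
qed

lemma br_ad:
  assumes "S \<noteq> T" shows "finite (br S \<inter> br T)"
proof -
  obtain k where k: "(k \<in> S) \<noteq> (k \<in> T)" using assms by blast
  have "br S \<inter> br T \<subseteq> (\<lambda>n. to_nat (map (\<lambda>i. i \<in> S) [0..<n])) ` {..k}"
  proof
    fix x assume "x \<in> br S \<inter> br T"
    then obtain n where x: "x = to_nat (map (\<lambda>i. i \<in> S) [0..<n])"
      unfolding br_def by blast
    obtain m where x2: "x = to_nat (map (\<lambda>i. i \<in> T) [0..<m])"
      using \<open>x \<in> br S \<inter> br T\<close> unfolding br_def by blast
    from x x2 have e: "map (\<lambda>i. i \<in> S) [0..<n] = map (\<lambda>i. i \<in> T) [0..<m]" by simp
    hence "n = m" by (metis length_map length_upt minus_nat.diff_0)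
    have "n \<le> k"
    proof (rule ccontr)
      assume "\<not> n \<le> k"
      hence "map (\<lambda>i. i \<in> S) [0..<n] ! k = map (\<lambda>i. i \<in> T) [0..<m] ! k" using e by simp
      thus False using k \<open>n = m\<close> \<open>\<not> n \<le> k\<close> by simp
    qed
    thus "x \<in> (\<lambda>n. to_nat (map (\<lambda>i. i \<in> S) [0..<n])) ` {..k}" using x by auto
  qed
  thus ?thesis using finite_subset by blast
qed

lemma ad_unique:
  assumes "infinite A" "finite (A - br S)" "finite (A - br T)" shows "S = T"
proof (rule ccontr)
  assume "S \<noteq> T"
  hence "finite (br S \<inter> br T)" by (rule br_ad)
  moreover have "A \<subseteq> (A - br S) \<union> (A - br T) \<union> (br S \<inter> br T)" by blast
  ultimately show False using assms finite_subset by blast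
qed

lemma ad_countable:
  assumes "infinite A" shows "countable {S. finite (A - br S)}"
proof (cases "\<exists>T. finite (A - br T)")
  case False
  hence "{S. finite (A - br S)} = {}" by blast
  thus ?thesis by simp
next
  case True
  then obtain T where T: "finite (A - br T)" by blast
  have "{S. finite (A - br S)} \<subseteq> {T}"
  proof
    fix S assume "S \<in> {S. finite (A - br S)}"
    hence "S = T" using ad_unique[OF assms _ T] by blast
    thus "S \<in> {T}" by simp
  qed
  moreover have "countable {T}" by simp
  ultimately show ?thesis by (rule countable_subset)
qed

lemma keyL:
  assumes G: "finite G" and inf: "\<forall>A\<in>G. infinite (A - B)"
  shows "infinite (Sset B - \<Union> (Sset ` G))"
proof -
  define T where "T = (\<lambda>A. SOME x. x \<in> A - B) ` G"
  have fT: "finite T" using G T_def by simp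
  have TA: "\<forall>A\<in>G. (SOME x. x \<in> A - B) \<in> A - B"
    using inf by (metis finite.emptyI some_in_eq)
  have TB: "T \<inter> B = {}" using TA T_def by auto
  have TA2: "\<forall>A\<in>G. \<exists>t\<in>T. t \<in> A" using TA T_def by blast
  define U where "U = (\<lambda>A. SOME x. x \<in> A - T) ` G"
  have UA: "\<forall>A\<in>G. (SOME x. x \<in> A - T) \<in> A - T"
  proof
    fix A assume "A \<in> G"
    hence "infinite (A - T)" using inf fT
      by (meson Diff_infinite_finite finite_Diff)
    thus "(SOME x. x \<in> A - T) \<in> A - T" by (metis finite.emptyI some_in_eq)
  qed
  have UA2: "\<forall>A\<in>G. \<exists>u\<in>U. u \<in> A \<and> u \<notin> T" using UA U_def by blast
  have "finite (T \<union> U)" using fT G U_def by simp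
  then obtain m where m: "\<forall>x\<in>T \<union> U. x < m" using finite_nat_set_iff_bounded by blast
  define \<sigma> where "\<sigma> = (\<lambda>n. map (\<lambda>i. i \<in> T) [0..<n])"
  have sub: "\<sigma> ` {m..} \<subseteq> Sset B - \<Union> (Sset ` G)"
  proof
    fix x assume "x \<in> \<sigma> ` {m..}"
    then obtain n where n: "n \<ge> m" "x = \<sigma> n" by auto
    have "x \<in> Sset B" unfolding Sset_def
      by (rule CollectI, rule exI[of _ False]) (use n TB in \<open>auto simp: \<sigma>_def\<close>)
    moreover have "x \<notin> Sset A" if "A \<in> G" for A
    proof
      assume "x \<in> Sset A"
      then obtain b where b: "\<forall>i\<in>A. i < length x \<longrightarrow> x ! i = b" unfolding Sset_def by auto
      obtain t where t: "t \<in> T" "t \<in> A" using TA2 \<open>A \<in> G\<close> by blast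
      obtain u where u: "u \<in> U" "u \<in> A" "u \<notin> T" using UA2 \<open>A \<in> G\<close> by blast
      have "t < m" using m t(1) by blast
      hence "t < n" using n(1) by linarith
      have "u < m" using m u(1) by blast
      hence "u < n" using n(1) by linarith
      have "x ! t = True" "x ! u = False" using n t u \<open>t < n\<close> \<open>u < n\<close> by (auto simp: \<sigma>_def)
      moreover have "length x = n" using n(2) by (simp add: \<sigma>_def)
      ultimately have "x ! t = b" "x ! u = b" using b t(2) u(2) \<open>t < n\<close> \<open>u < n\<close> by auto
      thus False using \<open>x ! t = True\<close> \<open>x ! u = False\<close> by simp
    qed
    ultimately show "x \<in> Sset B - \<Union> (Sset ` G)" by blast
  qed
  have "inj \<sigma>" by (rule injI) (metis \<sigma>_def diff_zero length_map length_upt)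
  hence "infinite (\<sigma> ` {m..})"
    by (meson finite_imageD infinite_Ici inj_on_subset subset_UNIV)
  thus ?thesis using sub finite_subset by blast
qed

lemma keyL2:
  assumes "almost_subset (Sset B) C" "finite G" "C \<subseteq> \<Union> (Sset ` G)"
  shows "\<exists>A\<in>G. finite (A - B)"
proof (rule ccontr)
  assume "\<not> ?thesis"
  hence "infinite (Sset B - \<Union> (Sset ` G))" using keyL assms(2) by blast
  moreover have "Sset B - \<Union> (Sset ` G) \<subseteq> Sset B - C" using assms(3) by blast
  ultimately show False using assms(1) unfolding almost_subset_def using finite_subset by blast
qed

lemma Sset_br_Spl: "Sset (br S) \<in> Spl"
  unfolding Spl_def using br_infinite by (intro CollectI exI[of _ "{br S}"]) auto

lemma uncountable_to_cardSuc:
  assumes "\<not> countable F" shows "(cardSuc natLeq, |F| ) \<in> ordLeq"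
proof -
  have "\<not> |F| \<le>o natLeq" using assms countable_card_le_natLeq by blast
  hence "natLeq <o |F|" using not_ordLeq_iff_ordLess natLeq_Well_order card_of_Well_order by blast
  thus ?thesis using cardSuc_ordLess_ordLeq natLeq_Card_order card_of_Card_order by blast
qed

lemma add_lower:
  assumes "add_omega_family Spl F" shows "\<not> countable F"
proof
  assume c: "countable F"
  show False
  proof (cases "F = {}")
    case True
    have "{} \<in> Spl" unfolding Spl_def by auto
    thus False using assms True unfolding add_omega_family_def by auto
  next
    case False
    have FS: "F \<subseteq> Spl" using assms unfolding add_omega_family_def by simp
    have H: "\<forall>X :: nat \<Rightarrow> bool list set. (\<forall>n. X n \<in> Spl) \<longrightarrow> (\<exists>A\<in>F. \<forall>n. \<not> almost_subset A (X n))"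
      using assms unfolding add_omega_family_def by simp
    have "\<forall>n. from_nat_into F n \<in> Spl" using from_nat_into[OF False] FS by blast
    then obtain A where A: "A \<in> F" "\<forall>n. \<not> almost_subset A (from_nat_into F n)"
      using H by blast
    obtain n where "from_nat_into F n = A" using from_nat_into_surj[OF c A(1)] by blast
    thus False using A(2) unfolding almost_subset_def by (metis Diff_cancel finite.emptyI)
  qed
qed

lemma UNIV_uncountable: "\<not> countable (UNIV :: nat set set)"
proof
  assume "countable (UNIV :: nat set set)"
  hence "|UNIV :: nat set set| \<le>o |UNIV::nat set|" using countable_card_of_nat by blast
  moreover have "|UNIV::nat set| <o |Pow (UNIV::nat set)|" by (rule card_of_Pow)
  ultimately show False using not_ordLess_ordLeq by auto
qed

lemma cof_lower:
  assumes "cof_omega_family Spl F" shows "( |UNIV :: nat set set|, |F| ) \<in> ordLeq"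
proof -
  define GG where "GG = (\<lambda>C. SOME G. finite G \<and> (\<forall>A\<in>G. infinite A) \<and> C \<subseteq> \<Union> (Sset ` G))"
  have GG: "finite (GG C) \<and> (\<forall>A\<in>GG C. infinite A) \<and> C \<subseteq> \<Union> (Sset ` GG C)" if "C \<in> Spl" for C
    using that unfolding GG_def Spl_def by (metis (mono_tags, lifting) mem_Collect_eq someI_ex)
  define K where "K = (\<lambda>Fb. \<Union>C\<in>Fb. \<Union>A\<in>GG C. {S. finite (A - br S)})"
  have FS: "\<forall>Fb\<in>F. Fb \<subseteq> Spl \<and> countable Fb" using assms unfolding cof_omega_family_def by blast
  have cK: "countable (K Fb)" if "Fb \<in> F" for Fb
    unfolding K_def
  proof (rule countable_UN)
    show "countable Fb" using FS that by blast
    fix C assume "C \<in> Fb"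
    hence "C \<in> Spl" using FS that by blast
    thus "countable (\<Union>A\<in>GG C. {S. finite (A - br S)})"
      using GG ad_countable by (intro countable_UN) (auto intro: countable_finite)
  qed
  have cov: "UNIV \<subseteq> (\<Union>Fb\<in>F. K Fb)"
  proof
    fix S :: "nat set"
    have one: "{Sset (br S)} \<subseteq> Spl \<and> countable {Sset (br S)}" using Sset_br_Spl by auto
    have HH: "\<forall>Ab. Ab \<subseteq> Spl \<and> countable Ab \<longrightarrow> (\<exists>Fb\<in>F. \<forall>A\<in>Ab. \<exists>C\<in>Fb. almost_subset A C)"
      using assms unfolding cof_omega_family_def by simp
    obtain Fb where Fb1: "Fb \<in> F" "\<forall>A\<in>{Sset (br S)}. \<exists>C\<in>Fb. almost_subset A C"
      using HH[rule_format, OF one] by blast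
    then obtain C where Fb: "Fb \<in> F" "C \<in> Fb" "almost_subset (Sset (br S)) C" by blast
    hence "C \<in> Spl" using FS by blast
    hence "finite (GG C)" "C \<subseteq> \<Union> (Sset ` GG C)" using GG by auto
    then obtain A where "A \<in> GG C" "finite (A - br S)" using keyL2[OF Fb(3)] by blast
    thus "S \<in> (\<Union>Fb\<in>F. K Fb)" using Fb unfolding K_def by blast
  qed
  have "\<not> countable F"
  proof
    assume "countable F"
    hence "countable (\<Union>Fb\<in>F. K Fb)" using cK by blast
    thus False using cov UNIV_uncountable countable_subset by blast
  qed
  hence inf: "infinite F" using countable_finite by blast
  have "|\<Union>Fb\<in>F. K Fb| \<le>o |F|"
  proof (rule card_of_UNION_ordLeq_infinite[OF inf])
    show "|F| \<le>o |F|" by (simp add: ordLeq_refl card_of_Card_order)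
    have nF: "|UNIV::nat set| \<le>o |F|" using inf infinite_iff_card_of_nat by blast
    show "\<forall>i\<in>F. |K i| \<le>o |F|"
    proof
      fix i assume "i \<in> F"
      hence "|K i| \<le>o |UNIV::nat set|" using cK countable_card_of_nat by blast
      thus "|K i| \<le>o |F|" using nF by (rule ordLeq_transitive)
    qed
  qed
  moreover have "|UNIV :: nat set set| \<le>o |\<Union>Fb\<in>F. K Fb|" using cov card_of_mono1 by blast
  ultimately show ?thesis using ordLeq_transitive by blast
qed

lemma add_upper: "\<exists>F. add_omega_family Spl F \<and> ( |F|, cardSuc natLeq) \<in> ordIso"
proof -
  have "natLeq <o |UNIV :: nat set set|"
  proof -
    have "|UNIV::nat set| <o |Pow (UNIV::nat set)|" by (rule card_of_Pow)
    hence "|UNIV::nat set| <o |UNIV :: nat set set|" by simp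
    thus ?thesis using card_of_nat ordIso_ordLess_trans ordIso_symmetric by blast
  qed
  hence "cardSuc natLeq \<le>o |UNIV :: nat set set|"
    using cardSuc_ordLess_ordLeq natLeq_Card_order card_of_Card_order by blast
  hence "|Field (cardSuc natLeq)| \<le>o |UNIV :: nat set set|"
    using card_of_Field_ordIso[OF cardSuc_Card_order[OF natLeq_Card_order]]
      ordIso_ordLeq_trans by blast
  then obtain f :: "_ \<Rightarrow> nat set" where f: "inj_on f (Field (cardSuc natLeq))"
    using card_of_ordLeq[of "Field (cardSuc natLeq)" "UNIV :: nat set set"] by auto
  define W where "W = f ` Field (cardSuc natLeq)"
  have "|W| =o |Field (cardSuc natLeq)|" unfolding W_def using f card_of_image
    by (metis card_of_ordIso inj_on_imp_bij_betw ordIso_symmetric)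
  hence W: "|W| =o cardSuc natLeq"
    using card_of_Field_ordIso[OF cardSuc_Card_order[OF natLeq_Card_order]]
      ordIso_transitive by blast
  have Wunc: "\<not> countable W"
  proof
    assume "countable W"
    hence "|W| \<le>o natLeq" using countable_card_le_natLeq by blast
    moreover have "natLeq <o cardSuc natLeq" using cardSuc_greater natLeq_Card_order by blast
    ultimately show False using W
      by (meson not_ordLess_ordIso ordLeq_ordLess_trans ordIso_symmetric ordLess_ordIso_trans ordLess_irreflexive)
  qed
  define F where "F = (\<lambda>S. Sset (br S)) ` W"
  have AF: "add_omega_family Spl F"
    unfolding add_omega_family_def
  proof (intro conjI allI impI)
    show "F \<subseteq> Spl" unfolding F_def using Sset_br_Spl by blast
    fix X :: "nat \<Rightarrow> bool list set" assume X: "\<forall>n. X n \<in> Spl"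
    define G where "G = (\<lambda>n. SOME G. finite G \<and> (\<forall>A\<in>G. infinite A) \<and> X n \<subseteq> \<Union> (Sset ` G))"
    have G: "finite (G n) \<and> (\<forall>A\<in>G n. infinite A) \<and> X n \<subseteq> \<Union> (Sset ` G n)" for n
      using X unfolding G_def Spl_def by (metis (mono_tags, lifting) mem_Collect_eq someI_ex)
    show "\<exists>A\<in>F. \<forall>n. \<not> almost_subset A (X n)"
    proof (rule ccontr)
      assume "\<not> ?thesis"
      hence H: "\<forall>S\<in>W. \<exists>n. almost_subset (Sset (br S)) (X n)" unfolding F_def by blast
      have "W \<subseteq> (\<Union>n. \<Union>A\<in>G n. {S. finite (A - br S)})"
      proof
        fix S assume "S \<in> W"
        then obtain n where "almost_subset (Sset (br S)) (X n)" using H by blast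
        moreover have "finite (G n)" "X n \<subseteq> \<Union> (Sset ` G n)" using G[of n] by auto
        ultimately obtain A where "A \<in> G n" "finite (A - br S)" using keyL2 by blast
        thus "S \<in> (\<Union>n. \<Union>A\<in>G n. {S. finite (A - br S)})" by blast
      qed
      moreover have "countable (\<Union>n. \<Union>A\<in>G n. {S. finite (A - br S)})"
        using G ad_countable by (intro countable_UN) (auto intro: countable_finite)
      ultimately show False using Wunc countable_subset by blast
    qed
  qed
  have "|F| \<le>o |W|" unfolding F_def by (rule card_of_image)
  hence "|F| \<le>o cardSuc natLeq" using W ordLeq_ordIso_trans by blast
  moreover have "cardSuc natLeq \<le>o |F|" using AF add_lower uncountable_to_cardSuc by blast
  ultimately show ?thesis using AF ordIso_iff_ordLeq by blast
qed

lemma finite_range_bound: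
  fixes a :: "nat \<Rightarrow> 'a"
  assumes "finite G" "G \<subseteq> range a" shows "\<exists>n. G \<subseteq> a ` {..<n}"
  using assms
proof (induction G rule: finite_induct)
  case empty thus ?case by blast
next
  case (insert x G)
  then obtain n where n: "G \<subseteq> a ` {..<n}" by blast
  obtain k where "x = a k" using insert by blast
  hence "insert x G \<subseteq> a ` {..<max n (Suc k)}" using n by auto
  thus ?case by blast
qed

lemma cof_upper: "\<exists>F. cof_omega_family Spl F \<and> ( |F|, |UNIV :: nat set set| ) \<in> ordIso"
proof -
  define \<Phi> where "\<Phi> = (\<lambda>a::nat \<Rightarrow> nat set. range (\<lambda>n. \<Union> (Sset ` (a ` {..<n}))) \<union> range (\<lambda>n. {replicate n True}))"
  define D where "D = {a::nat \<Rightarrow> nat set. \<forall>i. infinite (a i)}"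
  define F where "F = \<Phi> ` D"
  have rep: "{replicate n True} \<in> Spl" for n
    unfolding Spl_def Sset_def by (intro CollectI exI[of _ "{UNIV}"]) auto
  have CF: "cof_omega_family Spl F"
    unfolding cof_omega_family_def
  proof (intro conjI allI impI)
    show "F \<subseteq> {B. B \<subseteq> Spl \<and> countable B \<and> infinite B}"
    proof
      fix B assume "B \<in> F"
      then obtain a where a: "a \<in> D" "B = \<Phi> a" unfolding F_def by blast
      have "\<Union> (Sset ` (a ` {..<n})) \<in> Spl" for n
        unfolding Spl_def using a(1) D_def by (intro CollectI exI[of _ "a ` {..<n}"]) auto
      hence "B \<subseteq> Spl" using a rep unfolding \<Phi>_def by blast
      moreover have "countable B" using a unfolding \<Phi>_def by simp
      moreover have "infinite (range (\<lambda>n. {replicate n True}))"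
      proof
        assume "finite (range (\<lambda>n. {replicate n True}))"
        moreover have "inj (\<lambda>n. {replicate n True})"
          by (rule injI) (metis length_replicate singleton_inject)
        ultimately show False using finite_imageD by blast
      qed
      hence "infinite B" using a unfolding \<Phi>_def by (meson finite_Un)
      ultimately show "B \<in> {B. B \<subseteq> Spl \<and> countable B \<and> infinite B}" by blast
    qed
    fix Ab assume Ab: "Ab \<subseteq> Spl \<and> countable Ab"
    define GG where "GG = (\<lambda>C. SOME G. finite G \<and> (\<forall>A\<in>G. infinite A) \<and> C \<subseteq> \<Union> (Sset ` G))"
    have GG: "finite (GG C) \<and> (\<forall>A\<in>GG C. infinite A) \<and> C \<subseteq> \<Union> (Sset ` GG C)" if "C \<in> Spl" for C
      using that unfolding GG_def Spl_def by (metis (mono_tags, lifting) mem_Collect_eq someI_ex)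
    define AA where "AA = insert UNIV (\<Union>X\<in>Ab. GG X)"
    have cAA: "countable AA" unfolding AA_def using Ab GG
      by (intro countable_insert countable_UN) (auto intro: countable_finite)
    define a where "a = from_nat_into AA"
    have ra: "range a = AA" unfolding a_def using cAA AA_def by simp
    have aD: "a \<in> D" unfolding D_def
    proof (rule CollectI, rule allI)
      fix i have "a i \<in> AA" using ra by blast
      thus "infinite (a i)" unfolding AA_def using GG Ab by auto
    qed
    show "\<exists>Fb\<in>F. \<forall>A\<in>Ab. \<exists>C\<in>Fb. almost_subset A C"
    proof (rule bexI[of _ "\<Phi> a"])
      show "\<Phi> a \<in> F" using aD F_def by blast
      show "\<forall>X\<in>Ab. \<exists>C\<in>\<Phi> a. almost_subset X C"
      proof
      fix X assume "X \<in> Ab"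
      hence XS: "X \<in> Spl" using Ab by blast
      have r1: "GG X \<subseteq> range a" using ra AA_def \<open>X \<in> Ab\<close> by blast
      have r2: "finite (GG X)" using GG[OF XS] by blast
      obtain n where n: "GG X \<subseteq> a ` {..<n}" using finite_range_bound[OF r2 r1] by blast
      have "X \<subseteq> \<Union> (Sset ` GG X)" using GG[OF XS] by blast
      moreover have "\<Union> (Sset ` GG X) \<subseteq> \<Union> (Sset ` (a ` {..<n}))"
        using n by (intro Union_mono image_mono)
      ultimately have "X - \<Union> (Sset ` (a ` {..<n})) = {}" by (rule subset_trans[THEN Diff_eq_empty_iff[THEN iffD2]])
      hence "almost_subset X (\<Union> (Sset ` (a ` {..<n})))" unfolding almost_subset_def by (metis finite.emptyI)
      thus "\<exists>C\<in>\<Phi> a. almost_subset X C" unfolding \<Phi>_def by blast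
      qed
    qed
  qed
  define enc where "enc = (\<lambda>a::nat \<Rightarrow> nat set. {prod_encode (i, j) | i j. j \<in> a i})"
  have "inj enc"
  proof (rule injI)
    fix a b assume e: "enc a = enc b"
    have "j \<in> a i \<longleftrightarrow> j \<in> b i" for i j
    proof -
      have "j \<in> a i \<longleftrightarrow> prod_encode (i, j) \<in> enc a"
        unfolding enc_def by (auto dest: inj_onD[OF inj_prod_encode, rotated 2])
      moreover have "j \<in> b i \<longleftrightarrow> prod_encode (i, j) \<in> enc b"
        unfolding enc_def by (auto dest: inj_onD[OF inj_prod_encode, rotated 2])
      ultimately show ?thesis using e by simp
    qed
    thus "a = b" by blast
  qed
  hence "|D| \<le>o |UNIV :: nat set set|" using card_of_ordLeq
    by (metis inj_on_subset subset_UNIV)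
  hence "|F| \<le>o |UNIV :: nat set set|" unfolding F_def using card_of_image ordLeq_transitive by blast
  moreover have "|UNIV :: nat set set| \<le>o |F|" using CF cof_lower by blast
  ultimately show ?thesis using CF ordIso_iff_ordLeq by blast
qed

end

theorem mainTheorem14:
  shows "(\<exists>F. add_omega_family Spl F \<and> (card_of F, cardSuc natLeq) \<in> ordIso)
       \<and> (\<forall>F. add_omega_family Spl F \<longrightarrow> (cardSuc natLeq, card_of F) \<in> ordLeq)
       \<and> (\<exists>F. cof_omega_family Spl F \<and> (card_of F, card_of (UNIV :: nat set set)) \<in> ordIso)
       \<and> (\<forall>F. cof_omega_family Spl F \<longrightarrow> (card_of (UNIV :: nat set set), card_of F) \<in> ordLeq)"
proof -
  have P2: "\<forall>F. add_omega_family Spl F \<longrightarrow> (cardSuc natLeq, card_of F) \<in> ordLeq"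
    using add_lower uncountable_to_cardSuc by blast
  have P4: "\<forall>F. cof_omega_family Spl F \<longrightarrow> (card_of (UNIV :: nat set set), card_of F) \<in> ordLeq"
    using cof_lower by blast
  have P1: "\<exists>F. add_omega_family Spl F \<and> (card_of F, cardSuc natLeq) \<in> ordIso"
    by (rule add_upper)
  have P3: "\<exists>F. cof_omega_family Spl F \<and> (card_of F, card_of (UNIV :: nat set set)) \<in> ordIso"
    by (rule cof_upper)
  show ?thesis using P1 P2 P3 P4 by blast
qed

end
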